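(* Fix $\Lambda=(\lambda_1,\lambda_2)\in(0,\infty)^2$ and $\theta\in(0,1]$. For $(X_1,X_2)\sim\mathcal{BZIP}^-(\Lambda,\theta,\phi)$, the function $\phi\mapsto\mathrm{corr}(X_1,X_2)$ is increasing on $(0,1)$. More precisely, writing $\mathrm{corr}(X_1,X_2)=a_\Lambda(\phi)\,\mathrm{corr}(T_1,T_2)+b_\Lambda(\phi)$ with $a_\Lambda(\phi)=\{(1+\phi\lambda_1)(1+\phi\lambda_2)\}^{-1/2}$ and $b_\Lambda(\phi)=\phi\,a_\Lambda(\phi)\sqrt{\lambda_1\lambda_2}$, the function $a_\Lambda$ is decreasing and positive, $b_\Lambda$ is strictly increasing on $(0,1)$ (for every $\Lambda\in(0,\infty)^2$), and $\mathrm{corr}(T_1,T_2)\le 0$.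
   Context: For $\mu>0$, $G_\mu$ denotes the Poisson($\mu$) distribution function and $G_\mu^{-1}(u)=\inf\{x\in\mathbb N:G_\mu(x)\ge u\}$. $\mathcal{BZIP}^-(\Lambda,\theta,\phi)$ is the law of $(X_1,X_2)=W(T_1,T_2)$ with $W\sim$ Bernoulli$(1-\phi)$, $T_j=Y_j+Z_j$, $Y_j\sim\mathcal P((1-\theta)\lambda_j)$, $(Z_1,Z_2)=(G^{-1}_{\theta\lambda_1}(U),G^{-1}_{\theta\lambda_2}(1-U))$ with $U\sim\mathcal U(0,1)$, and $W,Y_1,Y_2,U$ mutually independent; the correlation of $(T_1,T_2)$ does not depend on $\phi$. *)

theory Defs
  imports "HOL-Probability.Probability"
begin

definition pois :: "real \<Rightarrow> nat pmf" where
  "pois mu = (if mu = 0 then return_pmf 0 else poisson_pmf mu)"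

definition pois_cdf :: "real \<Rightarrow> nat \<Rightarrow> real" where
  "pois_cdf mu x = measure_pmf.prob (pois mu) {..x}"

definition pois_qf :: "real \<Rightarrow> real \<Rightarrow> nat" where
  "pois_qf mu u = (LEAST x. u \<le> pois_cdf mu x)"

definition cov :: "'a measure \<Rightarrow> ('a \<Rightarrow> real) \<Rightarrow> ('a \<Rightarrow> real) \<Rightarrow> real" where
  "cov M X Y = (\<integral>w. X w * Y w \<partial>M) - (\<integral>w. X w \<partial>M) * (\<integral>w. Y w \<partial>M)"

definition corr :: "'a measure \<Rightarrow> ('a \<Rightarrow> real) \<Rightarrow> ('a \<Rightarrow> real) \<Rightarrow> real" where
  "corr M X Y = cov M X Y / sqrt (cov M X X * cov M Y Y)"

definition T_space :: "real \<Rightarrow> real \<Rightarrow> real \<Rightarrow> (real \<times> nat \<times> nat) measure" where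
  "T_space l1 l2 th =
     uniform_measure lborel {0<..<1::real} \<Otimes>\<^sub>M
       (measure_pmf (pois ((1 - th) * l1)) \<Otimes>\<^sub>M measure_pmf (pois ((1 - th) * l2)))"

definition T1 :: "real \<Rightarrow> real \<Rightarrow> (real \<times> nat \<times> nat) \<Rightarrow> real" where
  "T1 l1 th = (\<lambda>(u, y1, y2). real (y1 + pois_qf (th * l1) u))"

definition T2 :: "real \<Rightarrow> real \<Rightarrow> (real \<times> nat \<times> nat) \<Rightarrow> real" where
  "T2 l2 th = (\<lambda>(u, y1, y2). real (y2 + pois_qf (th * l2) (1 - u)))"

definition X_space :: "real \<Rightarrow> real \<Rightarrow> real \<Rightarrow> real \<Rightarrow> ((real \<times> nat \<times> nat) \<times> bool) measure" where
  "X_space l1 l2 th ph = T_space l1 l2 th \<Otimes>\<^sub>M measure_pmf (bernoulli_pmf (1 - ph))"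

definition X1 :: "real \<Rightarrow> real \<Rightarrow> ((real \<times> nat \<times> nat) \<times> bool) \<Rightarrow> real" where
  "X1 l1 th = (\<lambda>(v, w). if w then T1 l1 th v else 0)"

definition X2 :: "real \<Rightarrow> real \<Rightarrow> ((real \<times> nat \<times> nat) \<times> bool) \<Rightarrow> real" where
  "X2 l2 th = (\<lambda>(v, w). if w then T2 l2 th v else 0)"

definition corrT :: "real \<Rightarrow> real \<Rightarrow> real \<Rightarrow> real" where
  "corrT l1 l2 th = corr (T_space l1 l2 th) (T1 l1 th) (T2 l2 th)"

definition corrX :: "real \<Rightarrow> real \<Rightarrow> real \<Rightarrow> real \<Rightarrow> real" where
  "corrX l1 l2 th ph = corr (X_space l1 l2 th ph) (X1 l1 th) (X2 l2 th)"

definition a_Lam :: "real \<Rightarrow> real \<Rightarrow> real \<Rightarrow> real" where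
  "a_Lam l1 l2 ph = 1 / sqrt ((1 + ph * l1) * (1 + ph * l2))"

definition b_Lam :: "real \<Rightarrow> real \<Rightarrow> real \<Rightarrow> real" where
  "b_Lam l1 l2 ph = ph * a_Lam l1 l2 ph * sqrt (l1 * l2)"

end

theory Submission
  imports Defs
begin



lemma hbi_prod:
  fixes f :: "'a \<Rightarrow> real" and g :: "'b \<Rightarrow> real"
  assumes sf1: "sigma_finite_measure M1" and sf2: "sigma_finite_measure M2"
    and hf: "has_bochner_integral M1 f a" and hg: "has_bochner_integral M2 g b"
  shows "has_bochner_integral (M1 \<Otimes>\<^sub>M M2) (\<lambda>x. f (fst x) * g (snd x)) (a*b)"
proof -
  interpret pair_sigma_finite M1 M2 using sf1 sf2 by (simp add: pair_sigma_finite_def)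
  have intf: "integrable M1 f" and intg: "integrable M2 g"
    using hf hg by (auto simp: has_bochner_integral_iff)
  have [measurable]: "f \<in> borel_measurable M1" "g \<in> borel_measurable M2"
    using intf intg by auto
  have int: "integrable (M1 \<Otimes>\<^sub>M M2) (\<lambda>x. f (fst x) * g (snd x))"
  proof (rule Fubini_integrable)
    show "(\<lambda>x. f (fst x) * g (snd x)) \<in> borel_measurable (M1 \<Otimes>\<^sub>M M2)" by measurable
    show "integrable M1 (\<lambda>x. \<integral>y. norm (f (fst (x, y)) * g (snd (x, y))) \<partial>M2)"
      using intf intg by (simp add: abs_mult)
    show "AE x in M1. integrable M2 (\<lambda>y. f (fst (x, y)) * g (snd (x, y)))"
      using intg by simp
  qed
  have "integral\<^sup>L (M1 \<Otimes>\<^sub>M M2) (\<lambda>x. f (fst x) * g (snd x)) = (\<integral>x. (\<integral>y. f x * g y \<partial>M2) \<partial>M1)"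
    using integral_fst'[OF int] by simp
  also have "\<dots> = a * b" using hf hg by (simp add: has_bochner_integral_iff)
  finally show ?thesis using int by (simp add: has_bochner_integral_iff)
qed


lemma hbi_pmf_sums:
  fixes p :: "nat pmf" and h :: "nat \<Rightarrow> real"
  assumes h0: "\<And>k. 0 \<le> h k" and s: "(\<lambda>k. pmf p k * h k) sums s"
  shows "has_bochner_integral (measure_pmf p) h s"
proof (rule has_bochner_integral_nn_integral)
  show "h \<in> borel_measurable (measure_pmf p)" by simp
  show "AE x in measure_pmf p. 0 \<le> h x" using h0 by simp
  have nn: "\<And>k. 0 \<le> pmf p k * h k" using h0 by simp
  show "0 \<le> s" using sums_le[OF _ sums_zero s] nn by blast
  have "(\<integral>\<^sup>+ x. ennreal (h x) \<partial>measure_pmf p) = (\<Sum>k. ennreal (pmf p k * h k))"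
  proof -
    have "(\<integral>\<^sup>+ x. ennreal (h x) \<partial>measure_pmf p) = (\<integral>\<^sup>+ x. ennreal (pmf p x) * ennreal (h x) \<partial>count_space UNIV)"
      by (rule nn_integral_measure_pmf)
    also have "\<dots> = (\<integral>\<^sup>+ x. ennreal (pmf p x * h x) \<partial>count_space UNIV)"
      by (intro nn_integral_cong) (simp add: ennreal_mult h0)
    also have "\<dots> = (\<Sum>k. ennreal (pmf p k * h k))"
      by (rule nn_integral_count_space_nat)
    finally show ?thesis .
  qed
  also have "\<dots> = ennreal (\<Sum>k. pmf p k * h k)"
    using nn s by (intro suminf_ennreal2) (auto simp: sums_iff)
  also have "\<dots> = ennreal s" using s by (simp add: sums_iff)
  finally show "(\<integral>\<^sup>+ x. ennreal (h x) \<partial>measure_pmf p) = ennreal s" .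
qed

lemma poisson_sums:
  fixes mu :: real assumes mu: "0 < mu"
  shows "(\<lambda>k. pmf (poisson_pmf mu) k) sums 1"
    and "(\<lambda>k. pmf (poisson_pmf mu) k * real k) sums mu"
    and "(\<lambda>k. pmf (poisson_pmf mu) k * real k ^ 2) sums (mu + mu^2)"
proof -
  define q where "q = (\<lambda>n::nat. mu ^ n / fact n * exp (- mu))"
  have s0: "q sums 1"
  proof -
    have "(\<lambda>n. mu ^ n /\<^sub>R fact n) sums exp mu" by (rule exp_converges)
    then have "(\<lambda>n. mu ^ n /\<^sub>R fact n * exp (- mu)) sums (exp mu * exp (- mu))"
      by (rule sums_mult2)
    moreover have "(\<lambda>n. mu ^ n /\<^sub>R fact n * exp (- mu)) = q"
      by (simp add: q_def divide_inverse mult.commute)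
    ultimately show ?thesis by (simp add: exp_minus_inverse)
  qed
  have qs: "q (Suc n) = mu * q n / real (Suc n)" for n
  proof -
    have "q (Suc n) = mu * mu ^ n / (real (Suc n) * fact n) * exp (- mu)"
      unfolding q_def by (simp only: fact_Suc power_Suc of_nat_mult)
    also have "\<dots> = mu * q n / real (Suc n)"
      unfolding q_def by (simp add: field_simps del: of_nat_Suc)
    finally show ?thesis .
  qed
  have s1: "(\<lambda>k. q k * real k) sums mu"
  proof -
    have "(\<lambda>n. mu * q n) sums (mu * 1)" using s0 by (rule sums_mult)
    moreover have "(\<lambda>n. q (Suc n) * real (Suc n)) = (\<lambda>n. mu * q n)"
      by (rule ext) (simp only: qs nonzero_divide_mult_cancel_right of_nat_Suc, simp)
    ultimately have "(\<lambda>n. q (Suc n) * real (Suc n)) sums mu" by simp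
    then show ?thesis by (subst (asm) sums_Suc_iff) simp
  qed
  have s2: "(\<lambda>k. q k * real k ^ 2) sums (mu + mu^2)"
  proof -
    have "(\<lambda>n. mu * (q n * real n) + mu * q n) sums (mu * mu + mu * 1)"
      using s0 s1 by (intro sums_add sums_mult)
    moreover have "q (Suc n) * real (Suc n) ^ 2 = mu * (q n * real n) + mu * q n" for n
    proof -
      have "q (Suc n) * real (Suc n) ^ 2 = mu * q n * real (Suc n)"
        by (simp add: qs power2_eq_square del: of_nat_Suc)
      also have "\<dots> = mu * (q n * real n) + mu * q n" by (simp add: algebra_simps)
      finally show ?thesis .
    qed
    ultimately have "(\<lambda>n. q (Suc n) * real (Suc n) ^ 2) sums (mu * mu + mu * 1)"
      by (simp only:)
    then have "(\<lambda>n. q (Suc n) * real (Suc n) ^ 2) sums (mu + mu^2)"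
      by (simp add: power2_eq_square add.commute)
    then show ?thesis by (subst (asm) sums_Suc_iff) simp
  qed
  have pq: "\<And>k. pmf (poisson_pmf mu) k = q k" using mu by (simp add: q_def)
  show "(\<lambda>k. pmf (poisson_pmf mu) k) sums 1" using s0 by (simp add: pq)
  show "(\<lambda>k. pmf (poisson_pmf mu) k * real k) sums mu" using s1 by (simp add: pq)
  show "(\<lambda>k. pmf (poisson_pmf mu) k * real k ^ 2) sums (mu + mu^2)" using s2 by (simp add: pq)
qed
lemma pois_moments:
  fixes mu :: real assumes mu: "0 \<le> mu"
  shows "has_bochner_integral (measure_pmf (pois mu)) (\<lambda>k. 1::real) 1"
    and "has_bochner_integral (measure_pmf (pois mu)) (\<lambda>k. real k) mu"
    and "has_bochner_integral (measure_pmf (pois mu)) (\<lambda>k. real k ^ 2) (mu + mu^2)"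
proof -
  have "(\<lambda>k. pmf (pois mu) k * 1) sums 1 \<and> (\<lambda>k. pmf (pois mu) k * real k) sums mu \<and>
        (\<lambda>k. pmf (pois mu) k * real k ^ 2) sums (mu + mu^2)"
  proof (cases "mu = 0")
    case True
    have a: "(\<lambda>k. pmf (pois mu) k * 1) = (\<lambda>k. if k = 0 then 1 else 0)"
      using True by (auto simp: pois_def indicator_def)
    have b: "(\<lambda>k. pmf (pois mu) k * real k) = (\<lambda>k. 0)"
      using True by (auto simp: pois_def indicator_def)
    have c: "(\<lambda>k. pmf (pois mu) k * real k ^ 2) = (\<lambda>k. 0)"
      using True by (auto simp: pois_def indicator_def)
    show ?thesis unfolding a b c using True sums_single[of 0 "\<lambda>_. 1::real"] by simp
  next
    case False
    then have "0 < mu" using mu by simp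
    then show ?thesis using poisson_sums[of mu] False by (simp add: pois_def)
  qed
  then have S: "(\<lambda>k. pmf (pois mu) k * 1) sums 1" "(\<lambda>k. pmf (pois mu) k * real k) sums mu"
        "(\<lambda>k. pmf (pois mu) k * real k ^ 2) sums (mu + mu^2)" by auto
  show "has_bochner_integral (measure_pmf (pois mu)) (\<lambda>k. 1::real) 1"
    using hbi_pmf_sums[where h="\<lambda>k. 1" and p="pois mu" and s=1] S(1) by simp
  show "has_bochner_integral (measure_pmf (pois mu)) (\<lambda>k. real k) mu"
    by (rule hbi_pmf_sums[OF _ S(2)]) simp
  show "has_bochner_integral (measure_pmf (pois mu)) (\<lambda>k. real k ^ 2) (mu + mu^2)"
    by (rule hbi_pmf_sums[OF _ S(3)]) simp
qed



context fixes mu :: real assumes mu: "0 < mu"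
begin

lemma pois_eq: "pois mu = poisson_pmf mu" using mu by (simp add: pois_def)

lemma cdf_sum: "pois_cdf mu k = (\<Sum>i\<le>k. pmf (poisson_pmf mu) i)"
  unfolding pois_cdf_def pois_eq by (simp add: measure_measure_pmf_finite)

lemma pmf_pos: "0 < pmf (poisson_pmf mu) k"
  using mu by simp

lemma cdf_mono: "k \<le> j \<Longrightarrow> pois_cdf mu k \<le> pois_cdf mu j"
  unfolding cdf_sum by (rule sum_mono2) (auto simp: pmf_nonneg)

lemma cdf_Suc: "pois_cdf mu (Suc k) = pois_cdf mu k + pmf (poisson_pmf mu) (Suc k)"
  unfolding cdf_sum by simp

lemma cdf_0: "pois_cdf mu 0 = pmf (poisson_pmf mu) 0"
  unfolding cdf_sum by simp

lemma cdf_le1: "pois_cdf mu k \<le> 1"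
  unfolding pois_cdf_def by simp

lemma cdf_pos: "0 < pois_cdf mu k"
proof -
  have "pois_cdf mu 0 \<le> pois_cdf mu k" by (rule cdf_mono) simp
  then show ?thesis using pmf_pos[of 0] by (simp add: cdf_0)
qed

lemma cdf_lt1: "pois_cdf mu k < 1"
  using cdf_le1[of "Suc k"] pmf_pos[of "Suc k"] by (simp add: cdf_Suc)

lemma cdf_lim: "(\<lambda>k. pois_cdf mu k) \<longlonglongrightarrow> 1"
proof -
  have "(\<lambda>i. measure (measure_pmf (poisson_pmf mu)) {..i}) \<longlonglongrightarrow> measure (measure_pmf (poisson_pmf mu)) (\<Union>i. {..i})"
    by (rule measure_pmf.finite_Lim_measure_incseq) (auto simp: incseq_def)
  moreover have "(\<Union>i. {..i::nat}) = UNIV" by auto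
  ultimately show ?thesis unfolding pois_cdf_def pois_eq by simp
qed

lemma cdf_ex: "u < 1 \<Longrightarrow> \<exists>x. u \<le> pois_cdf mu x"
proof -
  assume "u < 1"
  then have "eventually (\<lambda>k. u < pois_cdf mu k) sequentially"
    using cdf_lim by (rule order_tendstoD(1)[rotated])
  then obtain N where "\<And>k. k \<ge> N \<Longrightarrow> u < pois_cdf mu k" by (auto simp: eventually_sequentially)
  then show ?thesis by (intro exI[of _ N]) (auto intro: less_imp_le)
qed

lemma qf_le_iff: "u < 1 \<Longrightarrow> pois_qf mu u \<le> k \<longleftrightarrow> u \<le> pois_cdf mu k"
proof -
  assume u: "u < 1"
  obtain x where x: "u \<le> pois_cdf mu x" using cdf_ex[OF u] by blast
  have L: "u \<le> pois_cdf mu (pois_qf mu u)"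
    unfolding pois_qf_def by (rule LeastI[of _ x]) (rule x)
  show ?thesis
  proof
    assume "pois_qf mu u \<le> k"
    then show "u \<le> pois_cdf mu k" using L cdf_mono[of "pois_qf mu u" k] by linarith
  next
    assume "u \<le> pois_cdf mu k"
    then show "pois_qf mu u \<le> k" unfolding pois_qf_def by (rule Least_le)
  qed
qed

lemma qf_eq_iff: "u < 1 \<Longrightarrow> pois_qf mu u = k \<longleftrightarrow> u \<le> pois_cdf mu k \<and> (k = 0 \<or> pois_cdf mu (k - 1) < u)"
proof -
  assume u: "u < 1"
  show ?thesis
  proof (cases k)
    case 0
    then show ?thesis using qf_le_iff[OF u, of 0] by auto
  next
    case (Suc j)
    have "pois_qf mu u = k \<longleftrightarrow> pois_qf mu u \<le> k \<and> \<not> pois_qf mu u \<le> j" using Suc by auto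
    then show ?thesis using qf_le_iff[OF u, of k] qf_le_iff[OF u, of j] Suc by auto
  qed
qed

lemma qf_ge1: "1 \<le> u \<Longrightarrow> pois_qf mu u = pois_qf mu 1"
proof -
  assume u: "1 \<le> u"
  have "(\<lambda>x. u \<le> pois_cdf mu x) = (\<lambda>x. 1 \<le> pois_cdf mu x)"
  proof (rule ext)
    fix x
    have "pois_cdf mu x < 1" by (rule cdf_lt1)
    then show "(u \<le> pois_cdf mu x) = (1 \<le> pois_cdf mu x)" using u by linarith
  qed
  then show ?thesis unfolding pois_qf_def by simp
qed

lemma qf_preimage:
  "{u. pois_qf mu u = k} = {u. (u < 1 \<and> u \<le> pois_cdf mu k \<and> (k = 0 \<or> pois_cdf mu (k - 1) < u))
      \<or> (1 \<le> u \<and> pois_qf mu 1 = k)}"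
proof (rule set_eqI)
  fix u :: real
  show "u \<in> {u. pois_qf mu u = k} \<longleftrightarrow> u \<in> {u. (u < 1 \<and> u \<le> pois_cdf mu k \<and> (k = 0 \<or> pois_cdf mu (k - 1) < u))
      \<or> (1 \<le> u \<and> pois_qf mu 1 = k)}"
  proof (cases "u < 1")
    case True
    then show ?thesis using qf_eq_iff[OF True, of k] by simp
  next
    case False
    then show ?thesis using qf_ge1[of u] by simp
  qed
qed

lemma qf_measurable[measurable]: "pois_qf mu \<in> measurable borel (count_space UNIV)"
  unfolding measurable_count_space_eq2_countable
proof (intro conjI ballI)
  fix k :: nat
  have "pois_qf mu -` {k} \<inter> space borel = {u. pois_qf mu u = k}" by auto
  also have "\<dots> \<in> sets borel" unfolding qf_preimage by measurable
  finally show "pois_qf mu -` {k} \<inter> space borel \<in> sets borel" .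
qed auto

definition "cm k = (if k = 0 then 0 else pois_cdf mu (k - 1))"

lemma cm_ge0: "0 \<le> cm k" using cdf_pos by (simp add: cm_def less_imp_le)

lemma cm_diff: "pois_cdf mu k - cm k = pmf (poisson_pmf mu) k"
  by (cases k) (simp_all add: cm_def cdf_0 cdf_Suc)

lemma cm_lt: "cm k < pois_cdf mu k" using cm_diff[of k] pmf_pos[of k] by simp

lemma qf_eq_iff01: "0 < u \<Longrightarrow> u < 1 \<Longrightarrow> pois_qf mu u = k \<longleftrightarrow> cm k < u \<and> u \<le> pois_cdf mu k"
  using qf_eq_iff[of u k] by (auto simp: cm_def)

lemma pre1: "{0<..<1} \<inter> {u. pois_qf mu u = k} = {cm k<..pois_cdf mu k}"
proof (rule set_eqI)
  fix u :: real
  show "u \<in> {0<..<1} \<inter> {u. pois_qf mu u = k} \<longleftrightarrow> u \<in> {cm k<..pois_cdf mu k}"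
  proof (cases "0 < u \<and> u < 1")
    case True
    then show ?thesis using qf_eq_iff01[of u k] by auto
  next
    case False
    then show ?thesis using cm_ge0[of k] cdf_lt1[of k] by auto
  qed
qed

lemma pre2: "{0<..<1} \<inter> {u. pois_qf mu (1 - u) = k} = {1 - pois_cdf mu k..<1 - cm k}"
proof -
  have "\<And>u. 0 < u \<Longrightarrow> u < 1 \<Longrightarrow> pois_qf mu (1 - u) = k \<longleftrightarrow> cm k < 1 - u \<and> 1 - u \<le> pois_cdf mu k"
    by (rule qf_eq_iff01) auto
  note A = this
  show ?thesis
  proof (rule set_eqI)
    fix u :: real
    show "u \<in> {0<..<1} \<inter> {u. pois_qf mu (1 - u) = k} \<longleftrightarrow> u \<in> {1 - pois_cdf mu k..<1 - cm k}"
    proof (cases "0 < u \<and> u < 1")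
      case True
      then show ?thesis using A[of u] by auto
    next
      case False
      then show ?thesis using cm_ge0[of k] cdf_lt1[of k] by auto
    qed
  qed
qed

lemma emeasure_U: "A \<in> sets borel \<Longrightarrow> emeasure (uniform_measure lborel {0<..<1::real}) A = emeasure lborel ({0<..<1} \<inter> A)"
  using emeasure_lborel_Ioo[of 0 "1::real"] by (simp add: divide_ennreal_def)

lemma distr_qf: "distr (uniform_measure lborel {0<..<1::real}) (count_space UNIV) (pois_qf mu) = measure_pmf (poisson_pmf mu)"
proof (rule measure_eqI_countable[where A=UNIV])
  fix k :: nat
  have "emeasure (distr (uniform_measure lborel {0<..<1::real}) (count_space UNIV) (pois_qf mu)) {k}
      = emeasure (uniform_measure lborel {0<..<1::real}) {u. pois_qf mu u = k}"
    by (subst emeasure_distr) (auto simp: vimage_def)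
  also have "\<dots> = emeasure lborel ({0<..<1} \<inter> {u. pois_qf mu u = k})"
    by (rule emeasure_U) (auto simp: qf_preimage[symmetric])
  also have "\<dots> = ennreal (pmf (poisson_pmf mu) k)"
    unfolding pre1 using cm_lt[of k] cm_diff[of k] by simp
  finally show "emeasure (distr (uniform_measure lborel {0<..<1::real}) (count_space UNIV) (pois_qf mu)) {k} = emeasure (measure_pmf (poisson_pmf mu)) {k}"
    by (simp add: emeasure_pmf_single)
qed auto

lemma distr_qf2: "distr (uniform_measure lborel {0<..<1::real}) (count_space UNIV) (\<lambda>u. pois_qf mu (1 - u)) = measure_pmf (poisson_pmf mu)"
proof (rule measure_eqI_countable[where A=UNIV])
  fix k :: nat
  have "emeasure (distr (uniform_measure lborel {0<..<1::real}) (count_space UNIV) (\<lambda>u. pois_qf mu (1 - u))) {k}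
      = emeasure (uniform_measure lborel {0<..<1::real}) {u. pois_qf mu (1 - u) = k}"
    by (subst emeasure_distr) (auto simp: vimage_def)
  also have "\<dots> = emeasure lborel ({0<..<1} \<inter> {u. pois_qf mu (1 - u) = k})"
    by (rule emeasure_U) measurable
  also have "\<dots> = ennreal (pmf (poisson_pmf mu) k)"
    unfolding pre2 using cm_lt[of k] cm_diff[of k] by simp
  finally show "emeasure (distr (uniform_measure lborel {0<..<1::real}) (count_space UNIV) (\<lambda>u. pois_qf mu (1 - u))) {k} = emeasure (measure_pmf (poisson_pmf mu)) {k}"
    by (simp add: emeasure_pmf_single)
qed auto

end


lemma hbi_distr_rev:
  fixes f :: "'b \<Rightarrow> real"
  assumes "f \<in> borel_measurable N" "g \<in> measurable M N" "has_bochner_integral (distr M N g) f x"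
  shows "has_bochner_integral M (\<lambda>x. f (g x)) x"
  using integrable_distr_eq[OF assms(2,1)] integral_distr[OF assms(2,1)] assms(3) by (simp add: has_bochner_integral_iff)

lemma hbi_const:
  assumes "prob_space M"
  shows "has_bochner_integral M (\<lambda>x. c::real) c"
proof -
  interpret prob_space M by fact
  show ?thesis by (simp add: has_bochner_integral_iff prob_space)
qed

lemma U_prob: "prob_space (uniform_measure lborel {0<..<1::real})"
  by (rule prob_space_uniform_measure) auto

context fixes mu :: real assumes mu: "0 < mu"
begin

lemma Z_moments:
  shows "has_bochner_integral (uniform_measure lborel {0<..<1::real}) (\<lambda>u. real (pois_qf mu u)) mu"
    and "has_bochner_integral (uniform_measure lborel {0<..<1::real}) (\<lambda>u. real (pois_qf mu u) ^ 2) (mu + mu^2)"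
    and "has_bochner_integral (uniform_measure lborel {0<..<1::real}) (\<lambda>u. real (pois_qf mu (1 - u))) mu"
    and "has_bochner_integral (uniform_measure lborel {0<..<1::real}) (\<lambda>u. real (pois_qf mu (1 - u)) ^ 2) (mu + mu^2)"
proof -
  have m1: "pois_qf mu \<in> measurable (uniform_measure lborel {0<..<1::real}) (count_space UNIV)"
    using qf_measurable[OF mu] by (simp add: measurable_cong_sets)
  have m2: "(\<lambda>u. pois_qf mu (1 - u)) \<in> measurable (uniform_measure lborel {0<..<1::real}) (count_space UNIV)"
    using qf_measurable[OF mu] by (simp add: measurable_cong_sets)
  have pm: "pois mu = poisson_pmf mu" by (rule pois_eq[OF mu])
  note M = pois_moments[of mu, unfolded pm]
  show "has_bochner_integral (uniform_measure lborel {0<..<1::real}) (\<lambda>u. real (pois_qf mu u)) mu"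
    by (rule hbi_distr_rev[OF _ m1]) (use M distr_qf[OF mu] mu in auto)
  show "has_bochner_integral (uniform_measure lborel {0<..<1::real}) (\<lambda>u. real (pois_qf mu u) ^ 2) (mu + mu^2)"
    by (rule hbi_distr_rev[OF _ m1, where f="\<lambda>k. real k ^ 2"]) (use M distr_qf[OF mu] mu in auto)
  show "has_bochner_integral (uniform_measure lborel {0<..<1::real}) (\<lambda>u. real (pois_qf mu (1 - u))) mu"
    by (rule hbi_distr_rev[OF _ m2]) (use M distr_qf2[OF mu] mu in auto)
  show "has_bochner_integral (uniform_measure lborel {0<..<1::real}) (\<lambda>u. real (pois_qf mu (1 - u)) ^ 2) (mu + mu^2)"
    by (rule hbi_distr_rev[OF _ m2, where f="\<lambda>k. real k ^ 2"]) (use M distr_qf2[OF mu] mu in auto)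
qed

lemma qf_mono: "u \<le> v \<Longrightarrow> v < 1 \<Longrightarrow> pois_qf mu u \<le> pois_qf mu v"
proof -
  assume uv: "u \<le> v" and v: "v < 1"
  have "v \<le> pois_cdf mu (pois_qf mu v)" using qf_le_iff[OF mu v, of "pois_qf mu v"] by simp
  then have "u \<le> pois_cdf mu (pois_qf mu v)" using uv by linarith
  then show ?thesis using qf_le_iff[OF mu, of u "pois_qf mu v"] uv v by simp
qed

end


lemma chebyshev_U:
  fixes f g :: "real \<Rightarrow> real"
  defines "U \<equiv> uniform_measure lborel {0<..<1::real}"
  assumes hf: "has_bochner_integral U f a" and hg: "has_bochner_integral U g b"
    and hfg: "has_bochner_integral U (\<lambda>x. f x * g x) c"
    and H: "\<And>x y. x \<in> {0<..<1} \<Longrightarrow> y \<in> {0<..<1} \<Longrightarrow> 0 \<le> (f x - f y) * (g y - g x)"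
  shows "c \<le> a * b"
proof -
  have P: "prob_space U" unfolding U_def by (rule U_prob)
  have inner: "has_bochner_integral U (\<lambda>y. (f x - f y) * (g y - g x)) (f x * b - f x * g x - c + a * g x)" for x
  proof -
    have "has_bochner_integral U (\<lambda>y. f x * g y - f x * g x - f y * g y + f y * g x) (f x * b - f x * g x - c + a * g x)"
      by (intro has_bochner_integral_add has_bochner_integral_diff has_bochner_integral_mult_right
          has_bochner_integral_mult_left hbi_const P hg hfg hf)
    then show ?thesis by (rule has_bochner_integral_cong[THEN iffD1, rotated -1]) (auto simp: algebra_simps)
  qed
  have AEnn: "AE x in U. 0 \<le> f x * b - f x * g x - c + a * g x"
    unfolding U_def
  proof (rule AE_uniform_measureI)
    show "{0<..<1::real} \<in> sets lborel" by simp
    show "AE x in lborel. x \<in> {0<..<1} \<longrightarrow> 0 \<le> f x * b - f x * g x - c + a * g x"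
    proof (rule AE_I2, rule impI)
      fix x :: real assume x: "x \<in> {0<..<1}"
      have "AE y in U. 0 \<le> (f x - f y) * (g y - g x)"
        unfolding U_def by (rule AE_uniform_measureI) (auto intro!: AE_I2 H x)
      then have "0 \<le> integral\<^sup>L U (\<lambda>y. (f x - f y) * (g y - g x))" by (rule integral_nonneg_AE)
      then show "0 \<le> f x * b - f x * g x - c + a * g x"
        using inner[of x] by (simp add: has_bochner_integral_iff)
    qed
  qed
  have outer: "has_bochner_integral U (\<lambda>x. f x * b - f x * g x - c + a * g x) (a * b - c - c + a * b)"
    by (intro has_bochner_integral_add has_bochner_integral_diff has_bochner_integral_mult_right
          has_bochner_integral_mult_left hbi_const P hg hfg hf)
  have "0 \<le> integral\<^sup>L U (\<lambda>x. f x * b - f x * g x - c + a * g x)"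
    using AEnn by (rule integral_nonneg_AE)
  then show ?thesis using outer by (simp add: has_bochner_integral_iff)
qed



lemma corr_alg:
  fixes l1 l2 ph d :: real
  assumes l1: "0 < l1" and l2: "0 < l2" and p0: "0 < ph" and p1: "ph < 1"
  shows "(1 - ph) * (d + ph * l1 * l2) / sqrt (((1 - ph) * l1 * (1 + ph * l1)) * ((1 - ph) * l2 * (1 + ph * l2)))
         = a_Lam l1 l2 ph * (d / sqrt (l1 * l2)) + b_Lam l1 l2 ph"
proof -
  define G where "G = (1 + ph * l1) * (1 + ph * l2)"
  define s where "s = sqrt (l1 * l2)"
  have G: "0 < G" using l1 l2 p0 unfolding G_def by (intro mult_pos_pos add_pos_pos) auto
  have s: "0 < s" using l1 l2 by (simp add: s_def)
  have ss: "s * s = l1 * l2" using l1 l2 by (simp add: s_def)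
  have sG: "0 < sqrt G" using G by simp
  have "((1 - ph) * l1 * (1 + ph * l1)) * ((1 - ph) * l2 * (1 + ph * l2)) = ((1 - ph) * (1 - ph)) * (l1 * l2) * G"
    by (simp add: G_def algebra_simps)
  then have "sqrt (((1 - ph) * l1 * (1 + ph * l1)) * ((1 - ph) * l2 * (1 + ph * l2))) = (1 - ph) * s * sqrt G"
  proof -
    assume e: "((1 - ph) * l1 * (1 + ph * l1)) * ((1 - ph) * l2 * (1 + ph * l2)) = ((1 - ph) * (1 - ph)) * (l1 * l2) * G"
    have "sqrt (((1 - ph) * (1 - ph)) * (l1 * l2) * G) = sqrt ((1 - ph) * (1 - ph)) * sqrt (l1 * l2) * sqrt G"
      by (simp only: real_sqrt_mult)
    moreover have "sqrt ((1 - ph) * (1 - ph)) = 1 - ph" using p1 by simp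
    ultimately show ?thesis unfolding e s_def by simp
  qed
  then have "(1 - ph) * (d + ph * l1 * l2) / sqrt (((1 - ph) * l1 * (1 + ph * l1)) * ((1 - ph) * l2 * (1 + ph * l2)))
      = (d + ph * (s * s)) / (s * sqrt G)"
    using p1 s sG by (simp add: ss mult.assoc)
  also have "\<dots> = (1 / sqrt G) * (d / s) + ph * (1 / sqrt G) * s"
    using s sG by (simp add: field_simps)
  finally show ?thesis unfolding a_Lam_def b_Lam_def G_def s_def .
qed


lemma a_pos: "0 < l1 \<Longrightarrow> 0 < l2 \<Longrightarrow> 0 < p \<Longrightarrow> 0 < a_Lam l1 l2 p"
  unfolding a_Lam_def by (simp add: add_pos_pos)

lemma a_mono:
  assumes l1: "0 < l1" and l2: "0 < l2" and p: "0 < p" and pq: "p \<le> q"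
  shows "a_Lam l1 l2 q \<le> a_Lam l1 l2 p"
proof -
  have gp: "0 < (1 + p * l1) * (1 + p * l2)" using l1 l2 p by (intro mult_pos_pos add_pos_pos) auto
  have "(1 + p * l1) * (1 + p * l2) \<le> (1 + q * l1) * (1 + q * l2)"
    using l1 l2 p pq by (intro mult_mono) (auto intro: mult_right_mono add_nonneg_nonneg)
  then have "sqrt ((1 + p * l1) * (1 + p * l2)) \<le> sqrt ((1 + q * l1) * (1 + q * l2))"
    by (rule real_sqrt_le_mono)
  moreover have "0 < sqrt ((1 + p * l1) * (1 + p * l2))" using gp by simp
  ultimately show ?thesis unfolding a_Lam_def by (intro divide_left_mono) auto
qed

lemma b_strict:
  assumes l1: "0 < l1" and l2: "0 < l2" and p: "0 < p" and pq: "p < q"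
  shows "b_Lam l1 l2 p < b_Lam l1 l2 q"
proof -
  define Gp where "Gp = (1 + p * l1) * (1 + p * l2)"
  define Gq where "Gq = (1 + q * l1) * (1 + q * l2)"
  have q: "0 < q" using p pq by simp
  have gp: "0 < Gp" unfolding Gp_def using l1 l2 p by (intro mult_pos_pos add_pos_pos) auto
  have gq: "0 < Gq" unfolding Gq_def using l1 l2 q by (intro mult_pos_pos add_pos_pos) auto
  have e: "q * q * Gp - p * p * Gq = (q - p) * (q + p) + p * q * (q - p) * (l1 + l2)"
    unfolding Gp_def Gq_def by (simp add: algebra_simps)
  have "0 < (q - p) * (q + p) + p * q * (q - p) * (l1 + l2)"
    using p q pq l1 l2 by (intro add_pos_nonneg mult_pos_pos mult_nonneg_nonneg) auto
  then have lt: "p * p * Gq < q * q * Gp" using e by linarith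
  have "sqrt (p * p * Gq) < sqrt (q * q * Gp)" using lt by (rule real_sqrt_less_mono)
  then have "p * sqrt Gq < q * sqrt Gp" using p q by (simp add: real_sqrt_mult)
  then have "p / sqrt Gp < q / sqrt Gq" using gp gq by (simp add: divide_simps)
  moreover have "0 < sqrt (l1 * l2)" using l1 l2 by simp
  ultimately have "p / sqrt Gp * sqrt (l1 * l2) < q / sqrt Gq * sqrt (l1 * l2)"
    by (rule mult_strict_right_mono)
  then show ?thesis unfolding b_Lam_def a_Lam_def Gp_def Gq_def by simp
qed



lemma hbi3:
  fixes f :: "'a \<Rightarrow> real" and g :: "'b \<Rightarrow> real" and h :: "'c \<Rightarrow> real"
  assumes p1: "prob_space M1" and p2: "prob_space M2" and p3: "prob_space M3"
    and hf: "has_bochner_integral M1 f a" and hg: "has_bochner_integral M2 g b"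
    and hh: "has_bochner_integral M3 h c"
  shows "has_bochner_integral (M1 \<Otimes>\<^sub>M (M2 \<Otimes>\<^sub>M M3))
           (\<lambda>x. f (fst x) * g (fst (snd x)) * h (snd (snd x))) (a * b * c)"
proof -
  have s1: "sigma_finite_measure M1" using p1 by (rule prob_space_imp_sigma_finite)
  have s2: "sigma_finite_measure M2" using p2 by (rule prob_space_imp_sigma_finite)
  have s3: "sigma_finite_measure M3" using p3 by (rule prob_space_imp_sigma_finite)
  have s23: "sigma_finite_measure (M2 \<Otimes>\<^sub>M M3)" using s2 s3 by (rule sigma_finite_pair_measure)
  have "has_bochner_integral (M2 \<Otimes>\<^sub>M M3) (\<lambda>y. g (fst y) * h (snd y)) (b * c)"
    by (rule hbi_prod[OF s2 s3 hg hh])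
  from hbi_prod[OF s1 s23 hf this]
  show ?thesis by (simp add: mult.assoc)
qed

lemma ab_le: "0 \<le> a \<Longrightarrow> 0 \<le> b \<Longrightarrow> a * b \<le> a^2 + (b::real)^2"
proof -
  assume a: "0 \<le> a" and b: "0 \<le> b"
  have "0 \<le> (a - b)^2" by simp
  then have "2 * (a * b) \<le> a^2 + b^2" by (simp add: power2_eq_square algebra_simps)
  moreover have "0 \<le> a * b" using a b by simp
  ultimately show ?thesis by linarith
qed

lemma T_moments:
  fixes l1 l2 th :: real
  assumes l1: "0 < l1" and l2: "0 < l2" and th0: "0 < th" and th1: "th \<le> 1"
  obtains c where "c \<le> th * l1 * (th * l2)"
    and "has_bochner_integral (T_space l1 l2 th) (T1 l1 th) l1"
    and "has_bochner_integral (T_space l1 l2 th) (T2 l2 th) l2"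
    and "has_bochner_integral (T_space l1 l2 th) (\<lambda>x. T1 l1 th x * T1 l1 th x) (l1 + l1^2)"
    and "has_bochner_integral (T_space l1 l2 th) (\<lambda>x. T2 l2 th x * T2 l2 th x) (l2 + l2^2)"
    and "has_bochner_integral (T_space l1 l2 th) (\<lambda>x. T1 l1 th x * T2 l2 th x) (l1 * l2 + (c - th * l1 * (th * l2)))"
proof -
  define U where "U = uniform_measure lborel {0<..<1::real}"
  define P1 where "P1 = measure_pmf (pois ((1 - th) * l1))"
  define P2 where "P2 = measure_pmf (pois ((1 - th) * l2))"
  define Z1 where "Z1 = (\<lambda>u. real (pois_qf (th * l1) u))"
  define Z2 where "Z2 = (\<lambda>u. real (pois_qf (th * l2) (1 - u)))"
  have TS: "T_space l1 l2 th = U \<Otimes>\<^sub>M (P1 \<Otimes>\<^sub>M P2)" by (simp add: T_space_def U_def P1_def P2_def)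
  have pU: "prob_space U" unfolding U_def by (rule U_prob)
  have pP1: "prob_space P1" unfolding P1_def by (rule measure_pmf.prob_space_axioms)
  have pP2: "prob_space P2" unfolding P2_def by (rule measure_pmf.prob_space_axioms)
  have mu1: "0 < th * l1" and mu2: "0 < th * l2" using th0 l1 l2 by auto
  have m1: "0 \<le> (1 - th) * l1" and m2: "0 \<le> (1 - th) * l2" using th1 l1 l2 by auto
  have ZM1: "has_bochner_integral U Z1 (th * l1)" "has_bochner_integral U (\<lambda>u. Z1 u ^ 2) (th * l1 + (th * l1)^2)"
    using Z_moments(1,2)[OF mu1] unfolding U_def Z1_def by auto
  have ZM2: "has_bochner_integral U Z2 (th * l2)" "has_bochner_integral U (\<lambda>u. Z2 u ^ 2) (th * l2 + (th * l2)^2)"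
    using Z_moments(3,4)[OF mu2] unfolding U_def Z2_def by auto
  note YM1 = pois_moments[OF m1, folded P1_def]
  note YM2 = pois_moments[OF m2, folded P2_def]
  have oneU: "has_bochner_integral U (\<lambda>x. 1::real) 1" by (rule hbi_const[OF pU])
  have mZ1: "Z1 \<in> borel_measurable U" using ZM1(1) by (auto simp: has_bochner_integral_iff)
  have mZ2: "Z2 \<in> borel_measurable U" using ZM2(1) by (auto simp: has_bochner_integral_iff)
  have intZ12: "integrable U (\<lambda>u. Z1 u * Z2 u)"
  proof (rule Bochner_Integration.integrable_bound)
    show "integrable U (\<lambda>u. Z1 u ^ 2 + Z2 u ^ 2)"
      using ZM1(2) ZM2(2) by (auto simp: has_bochner_integral_iff)
    show "(\<lambda>u. Z1 u * Z2 u) \<in> borel_measurable U" using mZ1 mZ2 by measurable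
    show "AE x in U. norm (Z1 x * Z2 x) \<le> norm (Z1 x ^ 2 + Z2 x ^ 2)"
    proof (rule AE_I2)
      fix x
      have "0 \<le> Z1 x" "0 \<le> Z2 x" by (simp_all add: Z1_def Z2_def)
      then show "norm (Z1 x * Z2 x) \<le> norm (Z1 x ^ 2 + Z2 x ^ 2)"
        using ab_le[of "Z1 x" "Z2 x"] by simp
    qed
  qed
  define c where "c = integral\<^sup>L U (\<lambda>u. Z1 u * Z2 u)"
  have hZ12: "has_bochner_integral U (\<lambda>u. Z1 u * Z2 u) c"
    using intZ12 by (simp add: has_bochner_integral_iff c_def)
  have cle: "c \<le> th * l1 * (th * l2)"
  proof (rule chebyshev_U[OF ZM1(1)[unfolded U_def] ZM2(1)[unfolded U_def] hZ12[unfolded U_def]])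
    fix x y :: real assume x: "x \<in> {0<..<1}" and y: "y \<in> {0<..<1}"
    show "0 \<le> (Z1 x - Z1 y) * (Z2 y - Z2 x)"
    proof (cases "x \<le> y")
      case True
      have "Z1 x \<le> Z1 y" unfolding Z1_def using qf_mono[OF mu1 True] y by simp
      moreover have "Z2 y \<le> Z2 x" unfolding Z2_def using qf_mono[OF mu2, of "1 - y" "1 - x"] True x by simp
      ultimately show ?thesis by (intro mult_nonpos_nonpos) auto
    next
      case False
      then have yx: "y \<le> x" by simp
      have "Z1 y \<le> Z1 x" unfolding Z1_def using qf_mono[OF mu1 yx] x by simp
      moreover have "Z2 x \<le> Z2 y" unfolding Z2_def using qf_mono[OF mu2, of "1 - x" "1 - y"] yx y by simp
      ultimately show ?thesis by (intro mult_nonneg_nonneg) auto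
    qed
  qed
  have T1e: "T1 l1 th x = real (fst (snd x)) + Z1 (fst x)" for x
    by (simp add: T1_def Z1_def split_beta)
  have T2e: "T2 l2 th x = real (snd (snd x)) + Z2 (fst x)" for x
    by (simp add: T2_def Z2_def split_beta)
  note H3 = hbi3[OF pU pP1 pP2]
  have "has_bochner_integral (T_space l1 l2 th) (T1 l1 th) l1"
  proof -
    have "has_bochner_integral (U \<Otimes>\<^sub>M (P1 \<Otimes>\<^sub>M P2))
      (\<lambda>x. Z1 (fst x) * 1 * 1 + 1 * real (fst (snd x)) * 1) (th * l1 * 1 * 1 + 1 * ((1 - th) * l1) * 1)"
      by (intro has_bochner_integral_add H3 ZM1 YM1 YM2 oneU)
    then show ?thesis unfolding TS
      by (rule has_bochner_integral_cong[THEN iffD1, rotated -1]) (auto simp: T1e algebra_simps)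
  qed
  moreover have "has_bochner_integral (T_space l1 l2 th) (T2 l2 th) l2"
  proof -
    have "has_bochner_integral (U \<Otimes>\<^sub>M (P1 \<Otimes>\<^sub>M P2))
      (\<lambda>x. Z2 (fst x) * 1 * 1 + 1 * 1 * real (snd (snd x))) (th * l2 * 1 * 1 + 1 * 1 * ((1 - th) * l2))"
      by (intro has_bochner_integral_add H3 ZM2 YM1 YM2 oneU)
    then show ?thesis unfolding TS
      by (rule has_bochner_integral_cong[THEN iffD1, rotated -1]) (auto simp: T2e algebra_simps)
  qed
  moreover have "has_bochner_integral (T_space l1 l2 th) (\<lambda>x. T1 l1 th x * T1 l1 th x) (l1 + l1^2)"
  proof -
    have "has_bochner_integral (U \<Otimes>\<^sub>M (P1 \<Otimes>\<^sub>M P2))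
      (\<lambda>x. 1 * real (fst (snd x)) ^ 2 * 1 + 2 * (Z1 (fst x) * real (fst (snd x)) * 1) + Z1 (fst x) ^ 2 * 1 * 1)
      (1 * ((1 - th) * l1 + ((1 - th) * l1)^2) * 1 + 2 * (th * l1 * ((1 - th) * l1) * 1) + (th * l1 + (th * l1)^2) * 1 * 1)"
      by (intro has_bochner_integral_add has_bochner_integral_mult_right H3 ZM1 YM1 YM2 oneU)
    then show ?thesis unfolding TS
      by (rule has_bochner_integral_cong[THEN iffD1, rotated -1]) (auto simp: T1e algebra_simps power2_eq_square)
  qed
  moreover have "has_bochner_integral (T_space l1 l2 th) (\<lambda>x. T2 l2 th x * T2 l2 th x) (l2 + l2^2)"
  proof -
    have "has_bochner_integral (U \<Otimes>\<^sub>M (P1 \<Otimes>\<^sub>M P2))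
      (\<lambda>x. 1 * 1 * real (snd (snd x)) ^ 2 + 2 * (Z2 (fst x) * 1 * real (snd (snd x))) + Z2 (fst x) ^ 2 * 1 * 1)
      (1 * 1 * ((1 - th) * l2 + ((1 - th) * l2)^2) + 2 * (th * l2 * 1 * ((1 - th) * l2)) + (th * l2 + (th * l2)^2) * 1 * 1)"
      by (intro has_bochner_integral_add has_bochner_integral_mult_right H3 ZM2 YM1 YM2 oneU)
    then show ?thesis unfolding TS
      by (rule has_bochner_integral_cong[THEN iffD1, rotated -1]) (auto simp: T2e algebra_simps power2_eq_square)
  qed
  moreover have "has_bochner_integral (T_space l1 l2 th) (\<lambda>x. T1 l1 th x * T2 l2 th x) (l1 * l2 + (c - th * l1 * (th * l2)))"
  proof -
    have "has_bochner_integral (U \<Otimes>\<^sub>M (P1 \<Otimes>\<^sub>M P2))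
      (\<lambda>x. 1 * real (fst (snd x)) * real (snd (snd x)) + Z2 (fst x) * real (fst (snd x)) * 1
         + Z1 (fst x) * 1 * real (snd (snd x)) + (Z1 (fst x) * Z2 (fst x)) * 1 * 1)
      (1 * ((1 - th) * l1) * ((1 - th) * l2) + th * l2 * ((1 - th) * l1) * 1
         + th * l1 * 1 * ((1 - th) * l2) + c * 1 * 1)"
      by (intro has_bochner_integral_add H3 ZM1 ZM2 YM1 YM2 oneU hZ12)
    then show ?thesis unfolding TS
      by (rule has_bochner_integral_cong[THEN iffD1, rotated -1]) (auto simp: T1e T2e algebra_simps)
  qed
  ultimately show ?thesis using cle that by blast
qed



lemma hbi_W:
  fixes f :: "'a \<Rightarrow> real"
  assumes pM: "prob_space M" and hf: "has_bochner_integral M f a" and q0: "0 \<le> q" and q1: "q \<le> 1"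
  shows "has_bochner_integral (M \<Otimes>\<^sub>M measure_pmf (bernoulli_pmf q)) (\<lambda>x. f (fst x) * (if snd x then 1 else 0)) (a * q)"
proof -
  have hb: "has_bochner_integral (measure_pmf (bernoulli_pmf q)) (\<lambda>w. if w then 1 else 0::real) q"
    using q0 q1 by (simp add: has_bochner_integral_iff integrable_measure_pmf_finite)
  show ?thesis
    by (rule hbi_prod[OF prob_space_imp_sigma_finite[OF pM] prob_space_imp_sigma_finite[OF measure_pmf.prob_space_axioms] hf hb])
qed

lemma main_formula:
  fixes l1 l2 th :: real
  assumes l1: "0 < l1" and l2: "0 < l2" and th0: "0 < th" and th1: "th \<le> 1"
  shows "corrT l1 l2 th \<le> 0 \<and> (\<forall>p\<in>{0<..<1::real}. corrX l1 l2 th p = a_Lam l1 l2 p * corrT l1 l2 th + b_Lam l1 l2 p)"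
proof -
  obtain c where cle: "c \<le> th * l1 * (th * l2)"
    and h1: "has_bochner_integral (T_space l1 l2 th) (T1 l1 th) l1"
    and h2: "has_bochner_integral (T_space l1 l2 th) (T2 l2 th) l2"
    and h11: "has_bochner_integral (T_space l1 l2 th) (\<lambda>x. T1 l1 th x * T1 l1 th x) (l1 + l1^2)"
    and h22: "has_bochner_integral (T_space l1 l2 th) (\<lambda>x. T2 l2 th x * T2 l2 th x) (l2 + l2^2)"
    and h12: "has_bochner_integral (T_space l1 l2 th) (\<lambda>x. T1 l1 th x * T2 l2 th x) (l1 * l2 + (c - th * l1 * (th * l2)))"
    using T_moments[OF l1 l2 th0 th1] by blast
  define d where "d = c - th * l1 * (th * l2)"
  have d0: "d \<le> 0" using cle by (simp add: d_def)
  have pT: "prob_space (T_space l1 l2 th)" unfolding T_space_def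
    by (intro prob_space_pair U_prob measure_pmf.prob_space_axioms)
  have cT: "corrT l1 l2 th = d / sqrt (l1 * l2)"
    using h1 h2 h11 h22 h12 unfolding corrT_def corr_def cov_def
    by (simp add: has_bochner_integral_iff d_def power2_eq_square)
  have "corrX l1 l2 th p = a_Lam l1 l2 p * corrT l1 l2 th + b_Lam l1 l2 p" if p: "p \<in> {0<..<1::real}" for p
  proof -
    have q0: "0 \<le> 1 - p" and q1: "1 - p \<le> 1" using p by auto
    have XS: "X_space l1 l2 th p = T_space l1 l2 th \<Otimes>\<^sub>M measure_pmf (bernoulli_pmf (1 - p))"
      by (simp add: X_space_def)
    have e1: "X1 l1 th x = T1 l1 th (fst x) * (if snd x then 1 else 0)" for x
      by (simp add: X1_def split_beta)
    have e2: "X2 l2 th x = T2 l2 th (fst x) * (if snd x then 1 else 0)" for x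
      by (simp add: X2_def split_beta)
    have g1: "has_bochner_integral (X_space l1 l2 th p) (X1 l1 th) (l1 * (1 - p))"
      unfolding XS using hbi_W[OF pT h1 q0 q1]
      by (rule has_bochner_integral_cong[THEN iffD1, rotated -1]) (auto simp: e1)
    have g2: "has_bochner_integral (X_space l1 l2 th p) (X2 l2 th) (l2 * (1 - p))"
      unfolding XS using hbi_W[OF pT h2 q0 q1]
      by (rule has_bochner_integral_cong[THEN iffD1, rotated -1]) (auto simp: e2)
    have g11: "has_bochner_integral (X_space l1 l2 th p) (\<lambda>x. X1 l1 th x * X1 l1 th x) ((l1 + l1^2) * (1 - p))"
      unfolding XS using hbi_W[OF pT h11 q0 q1]
      by (rule has_bochner_integral_cong[THEN iffD1, rotated -1]) (auto simp: e1)
    have g22: "has_bochner_integral (X_space l1 l2 th p) (\<lambda>x. X2 l2 th x * X2 l2 th x) ((l2 + l2^2) * (1 - p))"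
      unfolding XS using hbi_W[OF pT h22 q0 q1]
      by (rule has_bochner_integral_cong[THEN iffD1, rotated -1]) (auto simp: e2)
    have g12: "has_bochner_integral (X_space l1 l2 th p) (\<lambda>x. X1 l1 th x * X2 l2 th x) ((l1 * l2 + d) * (1 - p))"
      unfolding XS d_def using hbi_W[OF pT h12 q0 q1]
      by (rule has_bochner_integral_cong[THEN iffD1, rotated -1]) (auto simp: e1 e2)
    have c12: "cov (X_space l1 l2 th p) (X1 l1 th) (X2 l2 th) = (1 - p) * (d + p * l1 * l2)"
      unfolding cov_def has_bochner_integral_integral_eq[OF g1] has_bochner_integral_integral_eq[OF g2]
        has_bochner_integral_integral_eq[OF g12] by (simp add: algebra_simps)
    have c11: "cov (X_space l1 l2 th p) (X1 l1 th) (X1 l1 th) = (1 - p) * l1 * (1 + p * l1)"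
      unfolding cov_def has_bochner_integral_integral_eq[OF g1]
        has_bochner_integral_integral_eq[OF g11] by (simp add: algebra_simps power2_eq_square)
    have c22: "cov (X_space l1 l2 th p) (X2 l2 th) (X2 l2 th) = (1 - p) * l2 * (1 + p * l2)"
      unfolding cov_def has_bochner_integral_integral_eq[OF g2]
        has_bochner_integral_integral_eq[OF g22] by (simp add: algebra_simps power2_eq_square)
    have "corrX l1 l2 th p = (1 - p) * (d + p * l1 * l2) / sqrt (((1 - p) * l1 * (1 + p * l1)) * ((1 - p) * l2 * (1 + p * l2)))"
      unfolding corrX_def corr_def c12 c11 c22 ..
    also have "\<dots> = a_Lam l1 l2 p * (d / sqrt (l1 * l2)) + b_Lam l1 l2 p"
      using p by (intro corr_alg l1 l2) auto
    finally show ?thesis unfolding cT .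
  qed
  moreover have "corrT l1 l2 th \<le> 0" unfolding cT using d0 l1 l2 by (simp add: divide_nonpos_pos)
  ultimately show ?thesis by blast
qed


theorem mainTheorem5:
  fixes l1 l2 th :: real
  assumes "0 < l1" and "0 < l2" and "0 < th" and "th \<le> 1"
  shows "(\<forall>p\<in>{0<..<1::real}. \<forall>q\<in>{0<..<1::real}. p \<le> q \<longrightarrow> corrX l1 l2 th p \<le> corrX l1 l2 th q) \<and>
         (\<forall>p\<in>{0<..<1::real}. corrX l1 l2 th p = a_Lam l1 l2 p * corrT l1 l2 th + b_Lam l1 l2 p) \<and>
         (\<forall>p\<in>{0<..<1::real}. \<forall>q\<in>{0<..<1::real}. p \<le> q \<longrightarrow> a_Lam l1 l2 q \<le> a_Lam l1 l2 p) \<and>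
         (\<forall>p\<in>{0<..<1::real}. 0 < a_Lam l1 l2 p) \<and>
         strict_mono_on {0<..<1::real} (b_Lam l1 l2) \<and>
         corrT l1 l2 th \<le> 0"
proof -
  have MF: "corrT l1 l2 th \<le> 0" "\<forall>p\<in>{0<..<1::real}. corrX l1 l2 th p = a_Lam l1 l2 p * corrT l1 l2 th + b_Lam l1 l2 p"
    using main_formula[OF assms] by auto
  have AM: "\<forall>p\<in>{0<..<1::real}. \<forall>q\<in>{0<..<1::real}. p \<le> q \<longrightarrow> a_Lam l1 l2 q \<le> a_Lam l1 l2 p"
    using a_mono assms(1,2) by auto
  have AP: "\<forall>p\<in>{0<..<1::real}. 0 < a_Lam l1 l2 p" using a_pos assms(1,2) by auto
  have BS: "strict_mono_on {0<..<1::real} (b_Lam l1 l2)"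
    by (rule strict_mono_onI) (use b_strict assms(1,2) in auto)
  have CM: "\<forall>p\<in>{0<..<1::real}. \<forall>q\<in>{0<..<1::real}. p \<le> q \<longrightarrow> corrX l1 l2 th p \<le> corrX l1 l2 th q"
  proof (intro ballI impI)
    fix p q :: real assume p: "p \<in> {0<..<1}" and q: "q \<in> {0<..<1}" and pq: "p \<le> q"
    have "a_Lam l1 l2 p * corrT l1 l2 th \<le> a_Lam l1 l2 q * corrT l1 l2 th"
      using AM p q pq MF(1) by (intro mult_right_mono_neg) auto
    moreover have "b_Lam l1 l2 p \<le> b_Lam l1 l2 q"
    proof (cases "p = q")
      case False
      then have "p < q" using pq by simp
      then show ?thesis using b_strict[OF assms(1,2)] p by (auto intro: less_imp_le)
    qed simp
    ultimately show "corrX l1 l2 th p \<le> corrX l1 l2 th q" using MF(2) p q by simp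
  qed
  show ?thesis using CM MF AM AP BS by blast
qed


end
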